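(* Let $G$ be a finitely generated, torsion-free, $2$-step nilpotent group with Malcev basis $(A;C)=(a_1,\dots,a_n;c_1,\dots,c_m)$, $n\ge 2$. Assume $[a_i,a_j]\neq1$ for all $i\neq j$ and that $a_i$ is c-small for every $i=1,\dots,n$. Then the maximal ring of scalars of $G$ is isomorphic to $\mathbb{Z}$.
   Context: Commutators: $[g,h]=g^{-1}h^{-1}gh$. A Malcev basis is a pair $(A;C)$ with $C=\{c_1,\dots,c_m\}$ a basis of a free abelian subgroup with $G'\le\langle C\rangle\le Z(G)$ and $A=\{a_1,\dots,a_n\}$ such that $G/\langle C\rangle$ is free abelian with basis $\{a_i\langle C\rangle\}$. An element $g$ is c-small if its centralizer equals $\{g^t z\mid t\in\mathbb{Z},\ z\in Z(G)\}$. Rings are associative with identity. Let $f:G/Z(G)\times G/Z(G)\to G'$, $f(gZ(G),hZ(G))=[g,h]$. A commutative ring $R$ is a ring of scalars of $G$ if there are faithful actions of $R$ by endomorphisms on $M=G/Z(G)$ and $N=G'$ with $f(rx,y)=f(x,ry)=rf(x,y)$ for all $r\in R$, $x,y\in M$. Identifying each ring of scalars with its image in $\mathrm{End}(M)$, the maximal ring of scalars is the one containing all others. *)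

theory Defs
  imports "HOL-Algebra.UnivPoly" "HOL-Algebra.Subrings" "HOL-Algebra.Coset" "HOL-Algebra.Generated_Groups"
begin

definition gcomm :: "('a, 'b) monoid_scheme \<Rightarrow> 'a \<Rightarrow> 'a \<Rightarrow> 'a" where
  "gcomm G g h = inv\<^bsub>G\<^esub> g \<otimes>\<^bsub>G\<^esub> inv\<^bsub>G\<^esub> h \<otimes>\<^bsub>G\<^esub> g \<otimes>\<^bsub>G\<^esub> h"

definition derived_sub :: "('a, 'b) monoid_scheme \<Rightarrow> 'a set" where
  "derived_sub G = generate G {gcomm G g h | g h. g \<in> carrier G \<and> h \<in> carrier G}"

definition gcenter :: "('a, 'b) monoid_scheme \<Rightarrow> 'a set" where
  "gcenter G = {z \<in> carrier G. \<forall>g \<in> carrier G. z \<otimes>\<^bsub>G\<^esub> g = g \<otimes>\<^bsub>G\<^esub> z}"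

definition gcentralizer :: "('a, 'b) monoid_scheme \<Rightarrow> 'a \<Rightarrow> 'a set" where
  "gcentralizer G x = {g \<in> carrier G. g \<otimes>\<^bsub>G\<^esub> x = x \<otimes>\<^bsub>G\<^esub> g}"

definition finitely_generated_group :: "('a, 'b) monoid_scheme \<Rightarrow> bool" where
  "finitely_generated_group G \<longleftrightarrow> (\<exists>S. finite S \<and> S \<subseteq> carrier G \<and> generate G S = carrier G)"

definition torsion_free_group :: "('a, 'b) monoid_scheme \<Rightarrow> bool" where
  "torsion_free_group G \<longleftrightarrow>
     (\<forall>g \<in> carrier G. \<forall>k::nat. k > 0 \<longrightarrow> g [^]\<^bsub>G\<^esub> k = \<one>\<^bsub>G\<^esub> \<longrightarrow> g = \<one>\<^bsub>G\<^esub>)"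

definition two_step_nilpotent :: "('a, 'b) monoid_scheme \<Rightarrow> bool" where
  "two_step_nilpotent G \<longleftrightarrow> derived_sub G \<subseteq> gcenter G"

definition c_small :: "('a, 'b) monoid_scheme \<Rightarrow> 'a \<Rightarrow> bool" where
  "c_small G g \<longleftrightarrow>
     gcentralizer G g = {g [^]\<^bsub>G\<^esub> (t::int) \<otimes>\<^bsub>G\<^esub> z | t z. z \<in> gcenter G}"

definition gprod :: "('a, 'b) monoid_scheme \<Rightarrow> (nat \<Rightarrow> 'a) \<Rightarrow> nat \<Rightarrow> 'a" where
  "gprod G x k = foldr (\<lambda>i acc. x i \<otimes>\<^bsub>G\<^esub> acc) [0..<k] \<one>\<^bsub>G\<^esub>"

definition expvec :: "nat \<Rightarrow> (nat \<Rightarrow> int) set" where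
  "expvec k = {t. \<forall>i \<ge> k. t i = 0}"

text \<open>Malcev basis (A;C) = (a_0..a_{n-1}; c_0..c_{m-1}):
  C is a basis of the free abelian subgroup \<langle>C\<rangle>, G' \<le> \<langle>C\<rangle> \<le> Z(G),
  and G/\<langle>C\<rangle> is free abelian with basis a_i\<langle>C\<rangle>, i.e. every g lies in exactly
  one coset (a_0^t_0 ... a_{n-1}^t_{n-1})\<langle>C\<rangle>.\<close>
definition malcev_basis ::
    "('a, 'b) monoid_scheme \<Rightarrow> (nat \<Rightarrow> 'a) \<Rightarrow> nat \<Rightarrow> (nat \<Rightarrow> 'a) \<Rightarrow> nat \<Rightarrow> bool" where
  "malcev_basis G a n c m \<longleftrightarrow>
     (\<forall>i < n. a i \<in> carrier G) \<and> (\<forall>j < m. c j \<in> carrier G) \<and>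
     (\<forall>t \<in> expvec m. \<forall>t' \<in> expvec m.
        gprod G (\<lambda>j. c j [^]\<^bsub>G\<^esub> t j) m = gprod G (\<lambda>j. c j [^]\<^bsub>G\<^esub> t' j) m \<longrightarrow> t = t') \<and>
     derived_sub G \<subseteq> generate G (c ` {..<m}) \<and>
     generate G (c ` {..<m}) \<subseteq> gcenter G \<and>
     (\<forall>g \<in> carrier G. \<exists>!t. t \<in> expvec n \<and>
        g \<in> gprod G (\<lambda>i. a i [^]\<^bsub>G\<^esub> t i) n <#\<^bsub>G\<^esub> generate G (c ` {..<m}))"

definition Mgrp :: "('a, 'b) monoid_scheme \<Rightarrow> 'a set monoid" where
  "Mgrp G = FactGroup G (gcenter G)"

definition Ngrp :: "('a, 'b) monoid_scheme \<Rightarrow> ('a, 'b) monoid_scheme" where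
  "Ngrp G = G\<lparr>carrier := derived_sub G\<rparr>"

text \<open>f(gZ(G), hZ(G)) = [g,h] (well defined since G' is central).\<close>
definition cform :: "('a, 'b) monoid_scheme \<Rightarrow> 'a set \<Rightarrow> 'a set \<Rightarrow> 'a" where
  "cform G P Q = gcomm G (SOME g. g \<in> P) (SOME h. h \<in> Q)"

definition endo_ring :: "('c, 'd) monoid_scheme \<Rightarrow> ('c \<Rightarrow> 'c) ring" where
  "endo_ring H = \<lparr>carrier = {h \<in> hom H H. h \<in> extensional (carrier H)},
     mult = (\<lambda>s t. restrict (s \<circ> t) (carrier H)),
     one = restrict id (carrier H),
     zero = restrict (\<lambda>x. \<one>\<^bsub>H\<^esub>) (carrier H),
     add = (\<lambda>s t. restrict (\<lambda>x. s x \<otimes>\<^bsub>H\<^esub> t x) (carrier H))\<rparr>"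

text \<open>A ring of scalars, identified with its (faithful) image in End(M): a commutative
  subring S of End(M) together with a faithful action (injective unital ring
  homomorphism) of S on N such that f(sx,y) = f(x,sy) = s f(x,y).\<close>
definition ring_of_scalars :: "('a, 'b) monoid_scheme \<Rightarrow> ('a set \<Rightarrow> 'a set) set \<Rightarrow> bool" where
  "ring_of_scalars G S \<longleftrightarrow>
     subcring S (endo_ring (Mgrp G)) \<and>
     (\<exists>\<phi>. \<phi> \<in> ring_hom ((endo_ring (Mgrp G))\<lparr>carrier := S\<rparr>) (endo_ring (Ngrp G)) \<and>
          inj_on \<phi> S \<and>
          (\<forall>s \<in> S. \<forall>x \<in> carrier (Mgrp G). \<forall>y \<in> carrier (Mgrp G).
              cform G (s x) y = \<phi> s (cform G x y) \<and>
              cform G x (s y) = \<phi> s (cform G x y)))"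

definition maximal_ring_of_scalars :: "('a, 'b) monoid_scheme \<Rightarrow> ('a set \<Rightarrow> 'a set) set \<Rightarrow> bool" where
  "maximal_ring_of_scalars G S \<longleftrightarrow>
     ring_of_scalars G S \<and> (\<forall>S'. ring_of_scalars G S' \<longrightarrow> S' \<subseteq> S)"

end

theory Submission
  imports Defs
begin

locale tsn = group G for G (structure) +
  assumes two: "derived_sub G \<subseteq> gcenter G"
begin

abbreviation "Z \<equiv> gcenter G"
abbreviation "D \<equiv> derived_sub G"

lemma Z_sub: "Z \<subseteq> carrier G" by (auto simp: gcenter_def)

lemma Z_comm: "z \<in> Z \<Longrightarrow> g \<in> carrier G \<Longrightarrow> z \<otimes> g = g \<otimes> z"
  by (auto simp: gcenter_def)

lemma Z_subgroup: "subgroup Z G"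
proof
  show "Z \<subseteq> carrier G" by (rule Z_sub)
  show "\<one> \<in> Z" by (auto simp: gcenter_def)
  fix x y assume x: "x \<in> Z" and y: "y \<in> Z"
  have xc: "x \<in> carrier G" and yc: "y \<in> carrier G" using x y Z_sub by auto
  show "x \<otimes> y \<in> Z"
    unfolding gcenter_def
  proof (intro CollectI conjI ballI)
    fix g assume g: "g \<in> carrier G"
    have "x \<otimes> y \<otimes> g = x \<otimes> (g \<otimes> y)" using Z_comm[OF y g] by (simp add: m_assoc xc yc g)
    also have "\<dots> = g \<otimes> x \<otimes> y" using Z_comm[OF x g] by (simp add: m_assoc[symmetric] xc yc g)
    finally show "x \<otimes> y \<otimes> g = g \<otimes> (x \<otimes> y)" by (simp add: m_assoc xc yc g)
  qed (simp add: xc yc)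
  show "inv x \<in> Z"
    unfolding gcenter_def
  proof (intro CollectI conjI ballI)
    fix g assume g: "g \<in> carrier G"
    have "x \<otimes> inv g = inv g \<otimes> x" using Z_comm[OF x] g by simp
    hence "inv (x \<otimes> inv g) = inv (inv g \<otimes> x)" by simp
    thus "inv x \<otimes> g = g \<otimes> inv x" using xc g by (simp add: inv_mult_group)
  qed (simp add: xc)
qed

lemma Z_normal: "Z \<lhd> G"
  unfolding normal_inv_iff
proof (intro conjI ballI)
  show "subgroup Z G" by (rule Z_subgroup)
  fix x h assume x: "x \<in> carrier G" and h: "h \<in> Z"
  have hc: "h \<in> carrier G" using h Z_sub by auto
  have "x \<otimes> h \<otimes> inv x = h \<otimes> x \<otimes> inv x" using Z_comm[OF h x] by simp
  also have "\<dots> = h" using x hc by (simp add: m_assoc)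
  finally show "x \<otimes> h \<otimes> inv x \<in> Z" using h by simp
qed

lemma gcomm_closed: "g \<in> carrier G \<Longrightarrow> h \<in> carrier G \<Longrightarrow> gcomm G g h \<in> carrier G"
  by (simp add: gcomm_def)

lemma D_subgroup: "subgroup D G"
  unfolding derived_sub_def by (rule generate_is_subgroup) (auto intro: gcomm_closed)

lemma gcomm_D: "g \<in> carrier G \<Longrightarrow> h \<in> carrier G \<Longrightarrow> gcomm G g h \<in> D"
  unfolding derived_sub_def by (rule generate.incl) blast

lemma gcomm_Z: "g \<in> carrier G \<Longrightarrow> h \<in> carrier G \<Longrightarrow> gcomm G g h \<in> Z"
  using gcomm_D two by blast

lemma cancel1: "x \<in> carrier G \<Longrightarrow> y \<in> carrier G \<Longrightarrow> x \<otimes> (inv x \<otimes> y) = y"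
  by (simp add: m_assoc[symmetric])
lemma cancel2: "x \<in> carrier G \<Longrightarrow> y \<in> carrier G \<Longrightarrow> inv x \<otimes> (x \<otimes> y) = y"
  by (simp add: m_assoc[symmetric])

lemma gcomm_key: "g \<in> carrier G \<Longrightarrow> h \<in> carrier G \<Longrightarrow> g \<otimes> h = h \<otimes> g \<otimes> gcomm G g h"
  by (simp add: gcomm_def m_assoc cancel1)

lemma gcomm_alt: "g \<in> carrier G \<Longrightarrow> h \<in> carrier G \<Longrightarrow> gcomm G g h = inv (h \<otimes> g) \<otimes> (g \<otimes> h)"
  by (simp add: gcomm_def inv_mult_group m_assoc)

lemma gcomm_one_iff: "g \<in> carrier G \<Longrightarrow> h \<in> carrier G \<Longrightarrow> gcomm G g h = \<one> \<longleftrightarrow> g \<otimes> h = h \<otimes> g"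
  by (metis gcomm_key gcomm_alt r_one l_inv m_closed)

lemma gcomm_self: "g \<in> carrier G \<Longrightarrow> gcomm G g g = \<one>"
  using gcomm_one_iff by blast

lemma gcomm_mult_left:
  assumes x: "x \<in> carrier G" and y: "y \<in> carrier G" and h: "h \<in> carrier G"
  shows "gcomm G (x \<otimes> y) h = gcomm G x h \<otimes> gcomm G y h"
proof -
  let ?a = "gcomm G x h" and ?b = "gcomm G y h"
  have a: "?a \<in> Z" and b: "?b \<in> Z" using gcomm_Z x y h by auto
  have ac: "?a \<in> carrier G" and bc: "?b \<in> carrier G" using gcomm_closed x y h by auto
  have "x \<otimes> y \<otimes> h = x \<otimes> (h \<otimes> y \<otimes> ?b)" using gcomm_key[OF y h] by (simp add: m_assoc x y h)
  also have "\<dots> = (x \<otimes> h) \<otimes> y \<otimes> ?b" by (simp add: m_assoc x y h bc)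
  also have "\<dots> = h \<otimes> x \<otimes> ?a \<otimes> y \<otimes> ?b" using gcomm_key[OF x h] by simp
  also have "\<dots> = h \<otimes> x \<otimes> (?a \<otimes> y) \<otimes> ?b" by (simp add: m_assoc x y h ac bc)
  also have "\<dots> = h \<otimes> x \<otimes> (y \<otimes> ?a) \<otimes> ?b" using Z_comm[OF a y] by simp
  also have "\<dots> = (h \<otimes> (x \<otimes> y)) \<otimes> (?a \<otimes> ?b)" by (simp add: m_assoc x y h ac bc)
  finally have e: "x \<otimes> y \<otimes> h = (h \<otimes> (x \<otimes> y)) \<otimes> (?a \<otimes> ?b)" .
  show ?thesis
    unfolding gcomm_alt[OF m_closed[OF x y] h] e
    by (rule cancel2) (simp_all add: x y h ac bc)
qed

lemma gcomm_hom_left: "h \<in> carrier G \<Longrightarrow> (\<lambda>x. gcomm G x h) \<in> hom G G"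
  by (rule homI) (auto simp: gcomm_closed gcomm_mult_left)

lemma gcomm_pow_left:
  "g \<in> carrier G \<Longrightarrow> h \<in> carrier G \<Longrightarrow> gcomm G (g [^] (k::int)) h = gcomm G g h [^] k"
  using hom_int_pow[OF gcomm_hom_left _ is_group is_group] by simp

lemma gcomm_swap: "g \<in> carrier G \<Longrightarrow> h \<in> carrier G \<Longrightarrow> gcomm G h g = inv (gcomm G g h)"
  by (simp only: gcomm_alt inv_mult_group m_closed inv_closed inv_inv)

lemma gcomm_pow_right:
  assumes "g \<in> carrier G" "h \<in> carrier G"
  shows "gcomm G g (h [^] (k::int)) = gcomm G g h [^] k"
proof -
  have "gcomm G g (h [^] k) = inv (gcomm G (h [^] k) g)" using gcomm_swap[of "h [^] k" g] assms by simp
  also have "\<dots> = inv (gcomm G h g [^] k)" using gcomm_pow_left assms by simp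
  also have "\<dots> = inv ((inv (gcomm G g h)) [^] k)" using gcomm_swap[of g h] assms by simp
  also have "\<dots> = gcomm G g h [^] k" using assms gcomm_closed by (simp add: int_pow_inv)
  finally show ?thesis .
qed

lemma gcomm_central_left:
  assumes z: "z \<in> Z" and g: "g \<in> carrier G" and h: "h \<in> carrier G"
  shows "gcomm G (z \<otimes> g) h = gcomm G g h"
proof -
  have zc: "z \<in> carrier G" using z Z_sub by auto
  have e: "gcomm G z h = \<one>" using gcomm_one_iff[OF zc h] Z_comm[OF z h] by blast
  have "gcomm G (z \<otimes> g) h = gcomm G z h \<otimes> gcomm G g h" by (rule gcomm_mult_left[OF zc g h])
  thus ?thesis using e gcomm_closed[OF g h] by simp
qed

lemma gcomm_central_right:
  assumes z: "z \<in> Z" and g: "g \<in> carrier G" and h: "h \<in> carrier G"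
  shows "gcomm G g (z \<otimes> h) = gcomm G g h"
proof -
  have zc: "z \<in> carrier G" using z Z_sub by auto
  have "gcomm G g (z \<otimes> h) = inv (gcomm G (z \<otimes> h) g)" using gcomm_swap[of "z \<otimes> h" g] zc g h by simp
  also have "\<dots> = inv (gcomm G h g)" using gcomm_central_left[OF z h g] by simp
  also have "\<dots> = gcomm G g h" using gcomm_swap[of h g] g h by simp
  finally show ?thesis .
qed


abbreviation "M \<equiv> Mgrp G"
abbreviation "pr g \<equiv> Z #> g"

lemma M_eq: "M = G Mod Z" by (simp add: Mgrp_def)

lemma group_M: "group M"
  unfolding M_eq by (rule normal.factorgroup_is_group[OF Z_normal])

lemma pr_hom: "pr \<in> hom G M"
  unfolding M_eq by (rule normal.r_coset_hom_Mod[OF Z_normal])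

lemma carrier_M: "carrier M = pr ` carrier G"
  unfolding M_eq carrier_FactGroup by (simp add: r_coset_def)

lemma pr_carrier: "g \<in> carrier G \<Longrightarrow> pr g \<in> carrier M"
  using carrier_M by auto

lemma pr_mult: "g \<in> carrier G \<Longrightarrow> h \<in> carrier G \<Longrightarrow> pr g \<otimes>\<^bsub>M\<^esub> pr h = pr (g \<otimes> h)"
  using pr_hom by (simp add: hom_mult)

lemma pr_pow: "g \<in> carrier G \<Longrightarrow> pr g [^]\<^bsub>M\<^esub> (k::int) = pr (g [^] k)"
  unfolding M_eq using normal.FactGroup_int_pow[OF Z_normal] by (simp add: r_coset_def)

lemma one_M: "\<one>\<^bsub>M\<^esub> = Z" unfolding M_eq by simp

lemma pr_central: "z \<in> Z \<Longrightarrow> g \<in> carrier G \<Longrightarrow> pr (z \<otimes> g) = pr g"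
  using repr_independence[OF rcosI[OF _ Z_sub] _ Z_subgroup] by simp

lemma pr_one_iff: assumes g: "g \<in> carrier G" shows "pr g = \<one>\<^bsub>M\<^esub> \<longleftrightarrow> g \<in> Z"
proof
  show "pr g = \<one>\<^bsub>M\<^esub> \<Longrightarrow> g \<in> Z" using rcos_self[OF g Z_subgroup] one_M by simp
  show "g \<in> Z \<Longrightarrow> pr g = \<one>\<^bsub>M\<^esub>" using coset_join2[OF g Z_subgroup] one_M by simp
qed

lemma comm_group_M: "comm_group M"
proof (rule group.group_comm_groupI[OF group_M])
  fix x y assume "x \<in> carrier M" "y \<in> carrier M"
  then obtain g h where g: "g \<in> carrier G" "x = pr g" and h: "h \<in> carrier G" "y = pr h"
    using carrier_M by auto
  have c: "gcomm G g h \<in> Z" "gcomm G g h \<in> carrier G" using gcomm_Z gcomm_closed g h by auto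
  have "g \<otimes> h = gcomm G g h \<otimes> (h \<otimes> g)"
    using gcomm_key[OF g(1) h(1)] Z_comm[OF c(1), of "h \<otimes> g"] g h by simp
  hence "pr (g \<otimes> h) = pr (h \<otimes> g)" using pr_central c g h by simp
  thus "x \<otimes>\<^bsub>M\<^esub> y = y \<otimes>\<^bsub>M\<^esub> x" using g h pr_mult by simp
qed

lemma coset_elem: "g' \<in> pr g \<Longrightarrow> \<exists>z\<in>Z. g' = z \<otimes> g"
  by (auto simp: r_coset_def)

lemma cform_pi:
  assumes g: "g \<in> carrier G" and h: "h \<in> carrier G"
  shows "cform G (pr g) (pr h) = gcomm G g h"
proof -
  have "g \<in> pr g" "h \<in> pr h" using rcos_self[OF _ Z_subgroup] g h by auto
  hence "(SOME x. x \<in> pr g) \<in> pr g" "(SOME x. x \<in> pr h) \<in> pr h" by (metis someI)+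
  then obtain z w where a: "z \<in> Z" "w \<in> Z" and e: "(SOME x. x \<in> pr g) = z \<otimes> g" "(SOME x. x \<in> pr h) = w \<otimes> h"
    using coset_elem by metis
  have "gcomm G (z \<otimes> g) (w \<otimes> h) = gcomm G g (w \<otimes> h)"
    using gcomm_central_left a g h Z_sub by blast
  also have "\<dots> = gcomm G g h" using gcomm_central_right a g h by blast
  finally show ?thesis unfolding cform_def e .
qed


abbreviation "pw k \<equiv> restrict (\<lambda>x. x [^]\<^bsub>M\<^esub> (k::int)) (carrier M)"
abbreviation "E \<equiv> endo_ring M"

lemma carrier_E: "carrier E = {h \<in> hom M M. h \<in> extensional (carrier M)}"
  by (simp add: endo_ring_def)

lemma pw_carrier: "pw k \<in> carrier E"
proof -
  interpret Mg: comm_group M by (rule comm_group_M)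
  show ?thesis unfolding carrier_E
    by (auto intro!: homI simp: Mg.int_pow_distrib)
qed

lemma pw_add: "pw a \<oplus>\<^bsub>E\<^esub> pw b = pw (a + b)"
proof -
  interpret Mg: comm_group M by (rule comm_group_M)
  show ?thesis by (auto simp: endo_ring_def Mg.int_pow_mult intro!: ext)
qed

lemma pw_mult: "pw a \<otimes>\<^bsub>E\<^esub> pw b = pw (a * b)"
proof -
  interpret Mg: comm_group M by (rule comm_group_M)
  show ?thesis by (auto simp: endo_ring_def Mg.int_pow_pow mult.commute intro!: ext)
qed

lemma one_E: "\<one>\<^bsub>E\<^esub> = pw 1"
proof -
  interpret Mg: comm_group M by (rule comm_group_M)
  show ?thesis by (auto simp: endo_ring_def intro!: ext)
qed

lemma zero_E: "\<zero>\<^bsub>E\<^esub> = pw 0"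
  by (auto simp: endo_ring_def intro!: ext)

lemma ainv_E: "m_inv (add_monoid E) (pw a) = pw (- a)"
proof -
  interpret Mg: comm_group M by (rule comm_group_M)
  show ?thesis
    unfolding m_inv_def
  proof (rule the_equality)
    show "pw (- a) \<in> carrier (add_monoid E) \<and> pw a \<otimes>\<^bsub>add_monoid E\<^esub> pw (- a) = \<one>\<^bsub>add_monoid E\<^esub> \<and>
      pw (- a) \<otimes>\<^bsub>add_monoid E\<^esub> pw a = \<one>\<^bsub>add_monoid E\<^esub>"
      using pw_carrier pw_add zero_E by (simp add: add.commute)
  next
    fix y assume y: "y \<in> carrier (add_monoid E) \<and> pw a \<otimes>\<^bsub>add_monoid E\<^esub> y = \<one>\<^bsub>add_monoid E\<^esub> \<and>
      y \<otimes>\<^bsub>add_monoid E\<^esub> pw a = \<one>\<^bsub>add_monoid E\<^esub>"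
    hence yc: "y \<in> hom M M" "y \<in> extensional (carrier M)"
      and ye: "restrict (\<lambda>x. pw a x \<otimes>\<^bsub>M\<^esub> y x) (carrier M) = restrict (\<lambda>x. \<one>\<^bsub>M\<^esub>) (carrier M)"
      by (auto simp: endo_ring_def)
    show "y = pw (- a)"
    proof (rule extensionalityI[OF yc(2)])
      show "pw (- a) \<in> extensional (carrier M)" by simp
      fix x assume x: "x \<in> carrier M"
      have yx: "y x \<in> carrier M" using yc(1) x by (auto simp: hom_def)
      have "x [^]\<^bsub>M\<^esub> a \<otimes>\<^bsub>M\<^esub> y x = \<one>\<^bsub>M\<^esub>" using fun_cong[OF ye, of x] x by simp
      hence "y x = inv\<^bsub>M\<^esub> (x [^]\<^bsub>M\<^esub> a)"
        using Mg.inv_equality[symmetric, of "x [^]\<^bsub>M\<^esub> a" "y x"] Mg.m_comm x yx by simp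
      thus "y x = pw (- a) x" using x by (simp add: Mg.int_pow_neg)
    qed
  qed
qed

lemma S0_subcring: "subcring (range pw) E"
  unfolding subcring_def subring_def subcring_axioms_def subgroup_def submonoid_def
proof (intro conjI allI impI ballI)
  show "range pw \<subseteq> carrier (add_monoid E)" using pw_carrier by auto
  show "range pw \<subseteq> carrier E" using pw_carrier by auto
  show "\<one>\<^bsub>add_monoid E\<^esub> \<in> range pw"
  proof -
    have "\<one>\<^bsub>add_monoid E\<^esub> = pw 0" using zero_E by simp
    thus ?thesis by (simp only:) (rule rangeI)
  qed
  show "\<one>\<^bsub>E\<^esub> \<in> range pw" by (simp only: one_E) (rule rangeI)
  fix x y assume "x \<in> range pw" "y \<in> range pw"
  then obtain p q where "x = pw p" "y = pw q" by auto
  thus "x \<otimes>\<^bsub>add_monoid E\<^esub> y \<in> range pw" "x \<otimes>\<^bsub>E\<^esub> y \<in> range pw" "x \<otimes>\<^bsub>E\<^esub> y = y \<otimes>\<^bsub>E\<^esub> x"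
    using pw_add pw_mult by (auto simp: mult.commute)
next
  fix x assume "x \<in> range pw"
  then obtain p where "x = pw p" by auto
  thus "inv\<^bsub>add_monoid E\<^esub> x \<in> range pw" using ainv_E by simp
qed

end

locale tsn2 = tsn +
  fixes x0 x1
  assumes x0: "x0 \<in> carrier G" and x1: "x1 \<in> carrier G"
    and c01: "gcomm G x0 x1 \<noteq> \<one>"
    and tf: "torsion_free_group G"
begin

lemma tf_int:
  assumes g: "g \<in> carrier G" and ne: "g \<noteq> \<one>" and e: "g [^] (k::int) = \<one>"
  shows "k = 0"
proof (rule ccontr)
  assume k: "k \<noteq> 0"
  have "g [^] (nat \<bar>k\<bar>) = \<one>"
  proof (cases "k \<ge> 0")
    case True thus ?thesis using e by (metis int_pow_int abs_of_nonneg nat_0_le)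
  next
    case False
    hence "g [^] k = inv (g [^] (nat (- k)))" using g by (metis int_pow_neg_int nat_0_le neg_0_le_iff_le minus_minus linorder_not_le less_imp_le)
    hence "inv (g [^] (nat (- k))) = \<one>" using e by simp
    hence "g [^] (nat (- k)) = \<one>" using g by (metis inv_inv inv_one nat_pow_closed)
    thus ?thesis using False by simp
  qed
  moreover have "nat \<bar>k\<bar> > 0" using k by simp
  ultimately show False using tf g ne unfolding torsion_free_group_def by blast
qed

lemma pow_inj:
  assumes g: "g \<in> carrier G" and ne: "g \<noteq> \<one>" and e: "g [^] (k::int) = g [^] l"
  shows "k = l"
proof -
  have "g [^] (k - l) = \<one>" using e g by (simp add: int_pow_diff)
  thus ?thesis using tf_int g ne by fastforce
qed

abbreviation "c0 \<equiv> gcomm G x0 x1"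

lemma c0_carrier: "c0 \<in> carrier G" using gcomm_closed x0 x1 by simp

lemma pr_pow_inj:
  assumes e: "pr x0 [^]\<^bsub>M\<^esub> (k::int) = pr x0 [^]\<^bsub>M\<^esub> l" shows "k = l"
proof -
  interpret Mg: comm_group M by (rule comm_group_M)
  have "pr x0 [^]\<^bsub>M\<^esub> (k - l) = \<one>\<^bsub>M\<^esub>" using e pr_carrier[OF x0] by (simp add: Mg.int_pow_diff)
  hence "pr (x0 [^] (k - l)) = \<one>\<^bsub>M\<^esub>" using pr_pow x0 by simp
  hence z: "x0 [^] (k - l) \<in> Z" using pr_one_iff x0 by simp
  hence "gcomm G (x0 [^] (k - l)) x1 = \<one>"
    using gcomm_one_iff Z_comm[OF z x1] x0 x1 by simp
  hence "c0 [^] (k - l) = \<one>" using gcomm_pow_left x0 x1 by simp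
  hence "k - l = 0" using tf_int c0_carrier c01 by blast
  thus ?thesis by simp
qed

lemma pw_inj: "inj pw"
proof (rule injI)
  fix k l assume "pw k = pw l"
  hence "pw k (pr x0) = pw l (pr x0)" by simp
  thus "k = l" using pr_carrier[OF x0] pr_pow_inj by simp
qed

abbreviation "kof \<equiv> inv_into UNIV pw"

lemma kof_pw [simp]: "kof (pw k) = k"
  by (rule inv_f_f[OF pw_inj])

abbreviation "N \<equiv> Ngrp G"
abbreviation "phi \<equiv> \<lambda>s. restrict (\<lambda>y. y [^] (kof s)) D"

lemma carrier_N: "carrier N = D" by (simp add: Ngrp_def)
lemma mult_N: "mult N = mult G" by (simp add: Ngrp_def)
lemma one_N: "one N = one G" by (simp add: Ngrp_def)

lemma D_carrier: "D \<subseteq> carrier G" using D_subgroup subgroup.subset by blast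

lemma D_pow: "y \<in> D \<Longrightarrow> y [^] (k::int) \<in> D"
  using subgroup_int_pow_closed[OF D_subgroup] by blast

lemma phi_carrier: "phi (pw k) \<in> carrier (endo_ring N)"
proof -
  have "(\<lambda>y\<in>D. y [^] k) \<in> hom N N"
  proof (rule homI)
    fix x y assume x: "x \<in> carrier N" and y: "y \<in> carrier N"
    hence xD: "x \<in> D" and yD: "y \<in> D" by (auto simp: carrier_N)
    have xc: "x \<in> carrier G" and yc: "y \<in> carrier G" using xD yD D_carrier by auto
    have "x \<otimes> y = y \<otimes> x" using Z_comm[of x y] xD two yc by auto
    hence "(x \<otimes> y) [^] k = x [^] k \<otimes> y [^] k" using int_pow_mult_distrib xc yc by blast
    moreover have "x \<otimes> y \<in> D" using xD yD subgroup.m_closed[OF D_subgroup] by auto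
    ultimately show "(\<lambda>y\<in>D. y [^] k) (x \<otimes>\<^bsub>N\<^esub> y) = (\<lambda>y\<in>D. y [^] k) x \<otimes>\<^bsub>N\<^esub> (\<lambda>y\<in>D. y [^] k) y"
      using xD yD by (simp add: mult_N)
  qed (auto simp: carrier_N D_pow)
  thus ?thesis by (simp add: endo_ring_def carrier_N)
qed

lemma phi_ring_hom: "phi \<in> ring_hom (E\<lparr>carrier := range pw\<rparr>) (endo_ring N)"
proof (rule ring_hom_memI)
  fix x assume "x \<in> carrier (E\<lparr>carrier := range pw\<rparr>)"
  then obtain k where "x = pw k" by auto
  thus "phi x \<in> carrier (endo_ring N)" using phi_carrier by simp
next
  fix x y assume "x \<in> carrier (E\<lparr>carrier := range pw\<rparr>)" "y \<in> carrier (E\<lparr>carrier := range pw\<rparr>)"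
  then obtain k l where kl: "x = pw k" "y = pw l" by auto
  have "x \<otimes>\<^bsub>E\<lparr>carrier := range pw\<rparr>\<^esub> y = pw (k * l)" using pw_mult kl by simp
  moreover have "(\<lambda>z\<in>D. z [^] (k * l)) = phi x \<otimes>\<^bsub>endo_ring N\<^esub> phi y"
    using kl by (auto simp: endo_ring_def carrier_N D_pow int_pow_pow D_carrier[THEN subsetD] mult.commute intro!: ext)
  ultimately show "phi (x \<otimes>\<^bsub>E\<lparr>carrier := range pw\<rparr>\<^esub> y) = phi x \<otimes>\<^bsub>endo_ring N\<^esub> phi y" by simp
  have "x \<oplus>\<^bsub>E\<lparr>carrier := range pw\<rparr>\<^esub> y = pw (k + l)" using pw_add kl by simp
  moreover have "(\<lambda>z\<in>D. z [^] (k + l)) = phi x \<oplus>\<^bsub>endo_ring N\<^esub> phi y"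
    using kl by (auto simp: endo_ring_def carrier_N mult_N int_pow_mult D_carrier[THEN subsetD] intro!: ext)
  ultimately show "phi (x \<oplus>\<^bsub>E\<lparr>carrier := range pw\<rparr>\<^esub> y) = phi x \<oplus>\<^bsub>endo_ring N\<^esub> phi y" by simp
next
  show "phi \<one>\<^bsub>E\<lparr>carrier := range pw\<rparr>\<^esub> = \<one>\<^bsub>endo_ring N\<^esub>"
    using one_E by (auto simp: endo_ring_def carrier_N D_carrier[THEN subsetD] intro!: ext)
qed

lemma phi_inj: "inj_on phi (range pw)"
proof (rule inj_onI)
  fix x y assume "x \<in> range pw" "y \<in> range pw" and e: "phi x = phi y"
  then obtain k l where kl: "x = pw k" "y = pw l" by auto
  have "c0 \<in> D" using gcomm_D x0 x1 by simp
  hence "c0 [^] k = c0 [^] l" using fun_cong[OF e, of c0] kl by simp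
  hence "k = l" using pow_inj c0_carrier c01 by blast
  thus "x = y" using kl by simp
qed

lemma ros: "ring_of_scalars G (range pw)"
  unfolding ring_of_scalars_def
proof (intro conjI exI[of _ phi] ballI)
  show "subcring (range pw) E" by (rule S0_subcring)
  show "phi \<in> ring_hom (E\<lparr>carrier := range pw\<rparr>) (endo_ring N)" by (rule phi_ring_hom)
  show "inj_on phi (range pw)" by (rule phi_inj)
  fix s x y assume s: "s \<in> range pw" and x: "x \<in> carrier M" and y: "y \<in> carrier M"
  obtain k where k: "s = pw k" using s by auto
  obtain g h where g: "g \<in> carrier G" "x = pr g" and h: "h \<in> carrier G" "y = pr h"
    using x y carrier_M by auto
  have cD: "gcomm G g h \<in> D" using gcomm_D g h by simp
  show "cform G (s x) y = phi s (cform G x y)"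
    using k g h x cD by (simp add: pr_pow cform_pi gcomm_pow_left)
  show "cform G x (s y) = phi s (cform G x y)"
    using k g h y cD by (simp add: pr_pow cform_pi gcomm_pow_right)
qed

lemma iso: "E\<lparr>carrier := range pw\<rparr> \<simeq> INTEG"
  unfolding is_ring_iso_def ring_iso_def
proof -
  have "kof \<in> ring_hom (E\<lparr>carrier := range pw\<rparr>) INTEG"
  proof (rule ring_hom_memI)
    fix x y assume "x \<in> carrier (E\<lparr>carrier := range pw\<rparr>)" "y \<in> carrier (E\<lparr>carrier := range pw\<rparr>)"
    then obtain k l where kl: "x = pw k" "y = pw l" by auto
    show "kof (x \<otimes>\<^bsub>E\<lparr>carrier := range pw\<rparr>\<^esub> y) = kof x \<otimes>\<^bsub>INTEG\<^esub> kof y"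
      using kl pw_mult by (simp add: INTEG_def)
    show "kof (x \<oplus>\<^bsub>E\<lparr>carrier := range pw\<rparr>\<^esub> y) = kof x \<oplus>\<^bsub>INTEG\<^esub> kof y"
      using kl pw_add by (simp add: INTEG_def)
  qed (auto simp: INTEG_def one_E)
  moreover have "bij_betw kof (range pw) UNIV"
    unfolding bij_betw_def
  proof
    show "inj_on kof (range pw)" by (auto intro!: inj_onI)
    show "kof ` range pw = UNIV"
    proof -
      have "x \<in> kof ` range pw" for x :: int by (rule image_eqI[of _ _ "pw x"]) auto
      thus ?thesis by blast
    qed
  qed
  ultimately show "{h. h \<in> ring_hom (E\<lparr>carrier := range pw\<rparr>) INTEG \<and>
      bij_betw h (carrier (E\<lparr>carrier := range pw\<rparr>)) (carrier INTEG)} \<noteq> {}"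
    by (auto simp: INTEG_def)
qed


lemma maximal:
  fixes a :: "nat \<Rightarrow> 'a" and n :: nat
  assumes a: "\<forall>i<n. a i \<in> carrier G" and n: "0 < n"
    and nc: "\<forall>i<n. \<forall>j<n. i \<noteq> j \<longrightarrow> gcomm G (a i) (a j) \<noteq> \<one>"
    and cs: "\<forall>i<n. c_small G (a i)"
    and gen: "carrier G \<subseteq> generate G (a ` {..<n} \<union> Z)"
    and S': "ring_of_scalars G S'"
  shows "S' \<subseteq> range pw"
proof
  fix s assume sS: "s \<in> S'"
  interpret Mg: comm_group M by (rule comm_group_M)
  obtain phi' where ph: "phi' \<in> ring_hom (E\<lparr>carrier := S'\<rparr>) (endo_ring N)"
    and cf: "\<And>s x y. s \<in> S' \<Longrightarrow> x \<in> carrier M \<Longrightarrow> y \<in> carrier M \<Longrightarrow>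
              cform G (s x) y = phi' s (cform G x y) \<and> cform G x (s y) = phi' s (cform G x y)"
    using S' unfolding ring_of_scalars_def by blast
  have sub: "S' \<subseteq> carrier E" using S' unfolding ring_of_scalars_def subcring_def subring_def submonoid_def by blast
  have sE: "s \<in> hom M M" "s \<in> extensional (carrier M)" using sub sS carrier_E by auto
  have phs: "phi' s \<in> hom N N" using ph sS unfolding ring_hom_def by (auto simp: endo_ring_def)
  have grpN: "group N" unfolding Ngrp_def by (rule subgroup_imp_group[OF D_subgroup])
  have ph1: "phi' s \<one> = \<one>" using hom_one[OF phs grpN grpN] by (simp add: one_N)
  have sc: "\<And>x. x \<in> carrier M \<Longrightarrow> s x \<in> carrier M" using sE(1) by (auto simp: hom_def)
  have step2: "\<exists>t. s (pr (a i)) = pr (a i) [^]\<^bsub>M\<^esub> (t::int)" if i: "i < n" for i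
  proof -
    have ai: "a i \<in> carrier G" using a i by simp
    obtain g where g: "g \<in> carrier G" "s (pr (a i)) = pr g"
      using sc[OF pr_carrier[OF ai]] carrier_M by auto
    have "cform G (s (pr (a i))) (pr (a i)) = phi' s (cform G (pr (a i)) (pr (a i)))"
      using cf[OF sS pr_carrier[OF ai] pr_carrier[OF ai]] by simp
    hence "gcomm G g (a i) = \<one>" using g ai cform_pi gcomm_self ph1 by simp
    hence "g \<in> gcentralizer G (a i)" using gcomm_one_iff g ai by (simp add: gcentralizer_def)
    then obtain t z where tz: "g = a i [^] (t::int) \<otimes> z" "z \<in> Z"
      using cs i unfolding c_small_def by blast
    have "g = z \<otimes> a i [^] t" using tz Z_comm[OF tz(2), of "a i [^] t"] ai by simp
    hence "pr g = pr (a i [^] t)" using pr_central tz ai by simp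
    thus ?thesis using g pr_pow ai by auto
  qed
  have "\<forall>i. \<exists>t. i < n \<longrightarrow> s (pr (a i)) = pr (a i) [^]\<^bsub>M\<^esub> (t::int)" using step2 by blast
  then obtain T :: "nat \<Rightarrow> int" where T0: "\<forall>i. i < n \<longrightarrow> s (pr (a i)) = pr (a i) [^]\<^bsub>M\<^esub> (T i)"
    using choice[of "\<lambda>i t. i < n \<longrightarrow> s (pr (a i)) = pr (a i) [^]\<^bsub>M\<^esub> (t::int)"] by blast
  have T: "\<And>i. i < n \<Longrightarrow> s (pr (a i)) = pr (a i) [^]\<^bsub>M\<^esub> (T i)" using T0 by blast
  define k where "k = T 0"
  have Tk: "T i = k" if i: "i < n" for i
  proof (cases "i = 0")
    case True thus ?thesis by (simp add: k_def)
  next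
    case False
    have ai: "a i \<in> carrier G" and a0: "a 0 \<in> carrier G" using a i n by auto
    have "cform G (s (pr (a i))) (pr (a 0)) = cform G (pr (a i)) (s (pr (a 0)))"
      using cf[OF sS pr_carrier[OF ai] pr_carrier[OF a0]] by simp
    hence "gcomm G (a i [^] T i) (a 0) = gcomm G (a i) (a 0 [^] T 0)"
      using T i n ai a0 by (simp add: pr_pow cform_pi)
    hence "gcomm G (a i) (a 0) [^] T i = gcomm G (a i) (a 0) [^] T 0"
      using ai a0 by (simp add: gcomm_pow_left gcomm_pow_right)
    moreover have "gcomm G (a i) (a 0) \<noteq> \<one>" using nc i n False by auto
    ultimately show ?thesis using pow_inj gcomm_closed ai a0 k_def by blast
  qed
  define F where "F = {g \<in> carrier G. s (pr g) = pr g [^]\<^bsub>M\<^esub> k}"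
  have "subgroup F G"
  proof
    show "F \<subseteq> carrier G" by (auto simp: F_def)
    show "\<one> \<in> F" unfolding F_def
      using hom_one[OF sE(1) group_M group_M] pr_one_iff[of \<one>] Z_subgroup subgroup.one_closed by fastforce
    fix x y assume x: "x \<in> F" and y: "y \<in> F"
    have xc: "x \<in> carrier G" and yc: "y \<in> carrier G" using x y by (auto simp: F_def)
    have "s (pr (x \<otimes> y)) = s (pr x) \<otimes>\<^bsub>M\<^esub> s (pr y)"
      using pr_mult[OF xc yc] sE(1) pr_carrier xc yc by (metis hom_mult)
    also have "\<dots> = (pr x \<otimes>\<^bsub>M\<^esub> pr y) [^]\<^bsub>M\<^esub> k"
      using x y pr_carrier xc yc by (simp add: F_def Mg.int_pow_distrib)
    finally show "x \<otimes> y \<in> F" using xc yc pr_mult by (simp add: F_def)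
    have "s (pr (inv x)) = s (inv\<^bsub>M\<^esub> (pr x))"
      using pr_hom xc by (metis group_hom.hom_inv group_hom_axioms.intro group_hom_def is_group group_M)
    also have "\<dots> = inv\<^bsub>M\<^esub> (s (pr x))"
      using sE(1) pr_carrier[OF xc] by (metis group_hom.hom_inv group_hom_axioms.intro group_hom_def group_M)
    also have "\<dots> = (inv\<^bsub>M\<^esub> (pr x)) [^]\<^bsub>M\<^esub> k"
      using x pr_carrier[OF xc] by (simp add: F_def Mg.int_pow_inv)
    also have "inv\<^bsub>M\<^esub> (pr x) = pr (inv x)"
      using pr_hom xc by (metis group_hom.hom_inv group_hom_axioms.intro group_hom_def is_group group_M)
    finally show "inv x \<in> F" using xc by (simp add: F_def)
  qed
  moreover have "a ` {..<n} \<union> Z \<subseteq> F"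
  proof
    fix g assume "g \<in> a ` {..<n} \<union> Z"
    then consider (A) i where "i < n" "g = a i" | (B) "g \<in> Z" by auto
    thus "g \<in> F"
    proof cases
      case A thus ?thesis using T Tk a by (simp add: F_def)
    next
      case B
      hence gc: "g \<in> carrier G" using Z_sub by auto
      have "pr g = \<one>\<^bsub>M\<^esub>" using B pr_one_iff gc by simp
      thus ?thesis using gc hom_one[OF sE(1) group_M group_M] by (simp add: F_def)
    qed
  qed
  ultimately have "generate G (a ` {..<n} \<union> Z) \<subseteq> F" using generate_subgroup_incl by blast
  hence F: "carrier G \<subseteq> F" using gen by blast
  have "s = pw k"
  proof (rule extensionalityI[OF sE(2)])
    show "pw k \<in> extensional (carrier M)" by simp
    fix x assume "x \<in> carrier M"
    then obtain g where "g \<in> carrier G" "x = pr g" using carrier_M by auto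
    thus "s x = pw k x" using F pr_carrier by (auto simp: F_def)
  qed
  thus "s \<in> range pw" by simp
qed

end
lemma foldr_in_subgroup:
  assumes H: "subgroup H G" and x: "\<forall>i\<in>set xs. x i \<in> H"
  shows "foldr (\<lambda>i acc. x i \<otimes>\<^bsub>G\<^esub> acc) xs \<one>\<^bsub>G\<^esub> \<in> H"
  using x by (induction xs) (auto intro: subgroup.m_closed[OF H] subgroup.one_closed[OF H])

theorem theorem3p3:
  fixes G :: "('a, 'b) monoid_scheme" and a c :: "nat \<Rightarrow> 'a" and n m :: nat
  assumes "group G"
    and "finitely_generated_group G"
    and "torsion_free_group G"
    and "two_step_nilpotent G"
    and "malcev_basis G a n c m"
    and "n \<ge> 2"
    and "\<forall>i < n. \<forall>j < n. i \<noteq> j \<longrightarrow> gcomm G (a i) (a j) \<noteq> \<one>\<^bsub>G\<^esub>"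
    and "\<forall>i < n. c_small G (a i)"
  shows "\<exists>S. maximal_ring_of_scalars G S \<and> (endo_ring (Mgrp G))\<lparr>carrier := S\<rparr> \<simeq> INTEG"
proof -
  have ac: "\<forall>i<n. a i \<in> carrier G" using assms(5) unfolding malcev_basis_def by blast
  have f1: "derived_sub G \<subseteq> gcenter G" using assms(4) unfolding two_step_nilpotent_def .
  have f2: "a 0 \<in> carrier G" "a 1 \<in> carrier G" using ac assms(6) by auto
  have f3: "gcomm G (a 0) (a 1) \<noteq> \<one>\<^bsub>G\<^esub>" using assms(7,6) by auto
  interpret T: tsn2 G "a 0" "a 1"
    using assms(1,3) f1 f2 f3 by (simp add: tsn2_def tsn_def tsn_axioms_def tsn2_axioms_def)
  let ?H = "generate G (a ` {..<n} \<union> gcenter G)"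
  have Hsub: "subgroup ?H G"
    by (rule T.generate_is_subgroup) (use ac T.Z_sub in auto)
  have gen: "carrier G \<subseteq> ?H"
  proof
    fix g assume g: "g \<in> carrier G"
    obtain t :: "nat \<Rightarrow> int" where t: "g \<in> gprod G (\<lambda>i. a i [^]\<^bsub>G\<^esub> t i) n <#\<^bsub>G\<^esub> generate G (c ` {..<m})"
      using assms(5) g unfolding malcev_basis_def by blast
    have CZ: "generate G (c ` {..<m}) \<subseteq> gcenter G" using assms(5) unfolding malcev_basis_def by blast
    obtain h where h: "h \<in> generate G (c ` {..<m})" "g = gprod G (\<lambda>i. a i [^]\<^bsub>G\<^esub> t i) n \<otimes>\<^bsub>G\<^esub> h"
      using t unfolding l_coset_def by blast
    have "h \<in> ?H" using h(1) CZ by (auto intro: generate.incl)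
    moreover have "gprod G (\<lambda>i. a i [^]\<^bsub>G\<^esub> t i) n \<in> ?H"
      unfolding gprod_def
    proof (rule foldr_in_subgroup[OF Hsub], intro ballI)
      fix i assume "i \<in> set [0..<n]"
      hence i: "i < n" by simp
      have "a i \<in> ?H" using i by (auto intro: generate.incl)
      thus "a i [^]\<^bsub>G\<^esub> t i \<in> ?H" using T.subgroup_int_pow_closed[OF Hsub] by blast
    qed
    ultimately show "g \<in> ?H" using h(2) subgroup.m_closed[OF Hsub] by simp
  qed
  have "maximal_ring_of_scalars G (range T.pw)"
    unfolding maximal_ring_of_scalars_def
  proof (intro conjI allI impI)
    show "ring_of_scalars G (range T.pw)" by (rule T.ros)
    fix S' assume "ring_of_scalars G S'"
    thus "S' \<subseteq> range T.pw"
      using T.maximal[OF ac _ assms(7,8) gen] assms(6) by simp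
  qed
  thus ?thesis using T.iso by blast
qed

end
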